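(* Assume $\mathcal M$ satisfies extensibility. Let $\lambda\in\mathbb R^A$ with $\lambda>0$ such that $LP(\lambda)$ is feasible, and partition $A$ by equality of $\lambda_i$ into $S_1,\dots,S_d$ with $\lambda(S_1)<\dots<\lambda(S_d)$; set $T_g=\bigcup_{q=g}^dS_q$. (1) Every optimal solution $X$ of $LP(\lambda)$ is jointly optimal for $T_g$ for every $g\in[d]$, and for any two optimal solutions $X,Y$ of $LP(\lambda)$, $\mathrm{delay}_{S_g}(X)=\mathrm{delay}_{S_g}(Y)$ for all $g\in[d]$. (2) If $(\alpha,p)$ and $(\alpha',p')$ are optimal solutions of $DLP(\lambda)$ and, for some $g\in[d]$, $\sum_{i\in S_g,k}r_{ik}\alpha_{ik}=\sum_{i\in S_g,k}r_{ik}\alpha'_{ik}$, then $\mathrm{pay}_{S_g}(X,p)=\mathrm{pay}_{S_g}(X,p')$ for every optimal solution $X$ of $LP(\lambda)$. (3) If $X,X'$ are optimal solutions of $LP(\lambda)$, $(\alpha,p)$ is an optimal solution of $DLP(\lambda)$, $g\in[d]$ and $S\subseteq S_g$, then $\mathrm{delay}_S(X)\le\mathrm{delay}_S(X')$ implies $\mathrm{pay}_S(X,p)\ge\mathrm{pay}_S(X',p)$, and the first inequality is strict iff the second is strict.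
   Context: A market $\mathcal M$: finite agent set $A$, finite goods set $G$ (each of supply $1$), finite index set $C$; agent $i$ has real coefficients $a_{ijk}$, requirements $r_{ik}\ge0$, delays $d_{ij}\ge0$, budget $m_i>0$. CC$(i)$: $\sum_ja_{ijk}x_{ij}\ge r_{ik}$ for all $k$, $x_{ij}\ge0$. An allocation $X=(x_{ij})\ge0$ is supply respecting if $\sum_ix_{ij}\le1$ for all $j$. For $S\subseteq A$, $X$ is jointly optimal for $S$ if it satisfies CC$(i)$ for all $i\in S$, is supply respecting, and minimizes $\sum_{i\in S}\sum_jd_{ij}x_{ij}$ among allocations with these two properties. $\mathcal M$ satisfies extensibility if for every $S\subset A$, every $X$ jointly optimal for $S$, and every $i\in A\setminus S$, there is $X'$ jointly optimal for $S\cup\{i\}$ with $\sum_jd_{i'j}x'_{i'j}=\sum_jd_{i'j}x_{i'j}$ for all $i'\in S$. $LP(\lambda)$: minimize $\sum_i\lambda_i\sum_jd_{ij}x_{ij}$ s.t. $\sum_ja_{ijk}x_{ij}\ge r_{ik}$ for all $(i,k)$, $\sum_ix_{ij}\le1$ for all $j$, $x\ge0$. $DLP(\lambda)$: maximize $\sum_{i,k}r_{ik}\alpha_{ik}-\sum_jp_j$ s.t. $\lambda_id_{ij}\ge\sum_ka_{ijk}\alpha_{ik}-p_j$ for all $(i,j)$, $\alpha\ge0$, $p\ge0$. Notation: $\mathrm{delay}_S(X)=\sum_{i\in S}\sum_jd_{ij}x_{ij}$, $\mathrm{pay}_S(X,p)=\sum_{i\in S}\sum_jp_jx_{ij}$;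 $\lambda(S)$ denotes the common value of $\lambda_i$ for $i\in S$; $[d]=\{1,\dots,d\}$. *)

theory Defs
  imports Complex_Main
begin

text \<open>Allocations X :: agent => good => real; only values on A x G matter.\<close>

definition CC :: "'g set \<Rightarrow> 'c set \<Rightarrow> ('a \<Rightarrow> 'g \<Rightarrow> 'c \<Rightarrow> real) \<Rightarrow> ('a \<Rightarrow> 'c \<Rightarrow> real)
    \<Rightarrow> 'a \<Rightarrow> ('a \<Rightarrow> 'g \<Rightarrow> real) \<Rightarrow> bool" where
  "CC G C a r i X \<longleftrightarrow> (\<forall>k\<in>C. (\<Sum>j\<in>G. a i j k * X i j) \<ge> r i k) \<and> (\<forall>j\<in>G. X i j \<ge> 0)"

definition nonneg_alloc :: "'a set \<Rightarrow> 'g set \<Rightarrow> ('a \<Rightarrow> 'g \<Rightarrow> real) \<Rightarrow> bool" where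
  "nonneg_alloc A G X \<longleftrightarrow> (\<forall>i\<in>A. \<forall>j\<in>G. X i j \<ge> 0)"

definition supply_respecting :: "'a set \<Rightarrow> 'g set \<Rightarrow> ('a \<Rightarrow> 'g \<Rightarrow> real) \<Rightarrow> bool" where
  "supply_respecting A G X \<longleftrightarrow> (\<forall>j\<in>G. (\<Sum>i\<in>A. X i j) \<le> 1)"

definition delay :: "'g set \<Rightarrow> ('a \<Rightarrow> 'g \<Rightarrow> real) \<Rightarrow> 'a set \<Rightarrow> ('a \<Rightarrow> 'g \<Rightarrow> real) \<Rightarrow> real" where
  "delay G d S X = (\<Sum>i\<in>S. \<Sum>j\<in>G. d i j * X i j)"

definition pay :: "'g set \<Rightarrow> 'a set \<Rightarrow> ('a \<Rightarrow> 'g \<Rightarrow> real) \<Rightarrow> ('g \<Rightarrow> real) \<Rightarrow> real" where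
  "pay G S X p = (\<Sum>i\<in>S. \<Sum>j\<in>G. p j * X i j)"

definition admissible_for :: "'a set \<Rightarrow> 'g set \<Rightarrow> 'c set \<Rightarrow> ('a \<Rightarrow> 'g \<Rightarrow> 'c \<Rightarrow> real)
    \<Rightarrow> ('a \<Rightarrow> 'c \<Rightarrow> real) \<Rightarrow> 'a set \<Rightarrow> ('a \<Rightarrow> 'g \<Rightarrow> real) \<Rightarrow> bool" where
  "admissible_for A G C a r S X \<longleftrightarrow>
     nonneg_alloc A G X \<and> supply_respecting A G X \<and> (\<forall>i\<in>S. CC G C a r i X)"

definition jointly_optimal :: "'a set \<Rightarrow> 'g set \<Rightarrow> 'c set \<Rightarrow> ('a \<Rightarrow> 'g \<Rightarrow> 'c \<Rightarrow> real)
    \<Rightarrow> ('a \<Rightarrow> 'c \<Rightarrow> real) \<Rightarrow> ('a \<Rightarrow> 'g \<Rightarrow> real) \<Rightarrow> 'a set \<Rightarrow> ('a \<Rightarrow> 'g \<Rightarrow> real) \<Rightarrow> bool" where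
  "jointly_optimal A G C a r d S X \<longleftrightarrow>
     admissible_for A G C a r S X \<and>
     (\<forall>Y. admissible_for A G C a r S Y \<longrightarrow> delay G d S X \<le> delay G d S Y)"

definition extensibility :: "'a set \<Rightarrow> 'g set \<Rightarrow> 'c set \<Rightarrow> ('a \<Rightarrow> 'g \<Rightarrow> 'c \<Rightarrow> real)
    \<Rightarrow> ('a \<Rightarrow> 'c \<Rightarrow> real) \<Rightarrow> ('a \<Rightarrow> 'g \<Rightarrow> real) \<Rightarrow> bool" where
  "extensibility A G C a r d \<longleftrightarrow>
     (\<forall>S X i. S \<subset> A \<longrightarrow> jointly_optimal A G C a r d S X \<longrightarrow> i \<in> A - S \<longrightarrow>
        (\<exists>X'. jointly_optimal A G C a r d (insert i S) X' \<and>
              (\<forall>i'\<in>S. (\<Sum>j\<in>G. d i' j * X' i' j) = (\<Sum>j\<in>G. d i' j * X i' j))))"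

definition LP_feasible :: "'a set \<Rightarrow> 'g set \<Rightarrow> 'c set \<Rightarrow> ('a \<Rightarrow> 'g \<Rightarrow> 'c \<Rightarrow> real)
    \<Rightarrow> ('a \<Rightarrow> 'c \<Rightarrow> real) \<Rightarrow> ('a \<Rightarrow> 'g \<Rightarrow> real) \<Rightarrow> bool" where
  "LP_feasible A G C a r X \<longleftrightarrow> admissible_for A G C a r A X"

definition LP_obj :: "'a set \<Rightarrow> 'g set \<Rightarrow> ('a \<Rightarrow> 'g \<Rightarrow> real) \<Rightarrow> ('a \<Rightarrow> real)
    \<Rightarrow> ('a \<Rightarrow> 'g \<Rightarrow> real) \<Rightarrow> real" where
  "LP_obj A G d lam X = (\<Sum>i\<in>A. lam i * (\<Sum>j\<in>G. d i j * X i j))"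

definition LP_optimal :: "'a set \<Rightarrow> 'g set \<Rightarrow> 'c set \<Rightarrow> ('a \<Rightarrow> 'g \<Rightarrow> 'c \<Rightarrow> real)
    \<Rightarrow> ('a \<Rightarrow> 'c \<Rightarrow> real) \<Rightarrow> ('a \<Rightarrow> 'g \<Rightarrow> real) \<Rightarrow> ('a \<Rightarrow> real) \<Rightarrow> ('a \<Rightarrow> 'g \<Rightarrow> real) \<Rightarrow> bool" where
  "LP_optimal A G C a r d lam X \<longleftrightarrow>
     LP_feasible A G C a r X \<and>
     (\<forall>Y. LP_feasible A G C a r Y \<longrightarrow> LP_obj A G d lam X \<le> LP_obj A G d lam Y)"

definition DLP_feasible :: "'a set \<Rightarrow> 'g set \<Rightarrow> 'c set \<Rightarrow> ('a \<Rightarrow> 'g \<Rightarrow> 'c \<Rightarrow> real)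
    \<Rightarrow> ('a \<Rightarrow> 'g \<Rightarrow> real) \<Rightarrow> ('a \<Rightarrow> real) \<Rightarrow> ('a \<Rightarrow> 'c \<Rightarrow> real) \<Rightarrow> ('g \<Rightarrow> real) \<Rightarrow> bool" where
  "DLP_feasible A G C a d lam \<alpha> p \<longleftrightarrow>
     (\<forall>i\<in>A. \<forall>j\<in>G. lam i * d i j \<ge> (\<Sum>k\<in>C. a i j k * \<alpha> i k) - p j) \<and>
     (\<forall>i\<in>A. \<forall>k\<in>C. \<alpha> i k \<ge> 0) \<and> (\<forall>j\<in>G. p j \<ge> 0)"

definition DLP_obj :: "'a set \<Rightarrow> 'g set \<Rightarrow> 'c set \<Rightarrow> ('a \<Rightarrow> 'c \<Rightarrow> real)
    \<Rightarrow> ('a \<Rightarrow> 'c \<Rightarrow> real) \<Rightarrow> ('g \<Rightarrow> real) \<Rightarrow> real" where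
  "DLP_obj A G C r \<alpha> p = (\<Sum>i\<in>A. \<Sum>k\<in>C. r i k * \<alpha> i k) - (\<Sum>j\<in>G. p j)"

definition DLP_optimal :: "'a set \<Rightarrow> 'g set \<Rightarrow> 'c set \<Rightarrow> ('a \<Rightarrow> 'g \<Rightarrow> 'c \<Rightarrow> real)
    \<Rightarrow> ('a \<Rightarrow> 'c \<Rightarrow> real) \<Rightarrow> ('a \<Rightarrow> 'g \<Rightarrow> real) \<Rightarrow> ('a \<Rightarrow> real)
    \<Rightarrow> ('a \<Rightarrow> 'c \<Rightarrow> real) \<Rightarrow> ('g \<Rightarrow> real) \<Rightarrow> bool" where
  "DLP_optimal A G C a r d lam \<alpha> p \<longleftrightarrow>
     DLP_feasible A G C a d lam \<alpha> p \<and>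
     (\<forall>\<beta> q. DLP_feasible A G C a d lam \<beta> q \<longrightarrow> DLP_obj A G C r \<beta> q \<le> DLP_obj A G C r \<alpha> p)"

text \<open>Partition of A by equal lambda values, ordered increasingly:
  number of classes, g-th value (g in 1..d), class S_g, and T_g = union of S_q, q = g..d.\<close>
definition num_classes :: "'a set \<Rightarrow> ('a \<Rightarrow> real) \<Rightarrow> nat" where
  "num_classes A lam = card (lam ` A)"

definition class_value :: "'a set \<Rightarrow> ('a \<Rightarrow> real) \<Rightarrow> nat \<Rightarrow> real" where
  "class_value A lam g = sorted_list_of_set (lam ` A) ! (g - 1)"

definition class_set :: "'a set \<Rightarrow> ('a \<Rightarrow> real) \<Rightarrow> nat \<Rightarrow> 'a set" where
  "class_set A lam g = {i\<in>A. lam i = class_value A lam g}"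

definition upper_set :: "'a set \<Rightarrow> ('a \<Rightarrow> real) \<Rightarrow> nat \<Rightarrow> 'a set" where
  "upper_set A lam g = (\<Union>q\<in>{g..num_classes A lam}. class_set A lam q)"

end

theory Submission
  imports Defs
begin


inductive derivable :: "(('v \<Rightarrow> real) \<times> real) set \<Rightarrow> ('v \<Rightarrow> real) \<times> real \<Rightarrow> bool"
  for K where
  base: "\<kappa> \<in> K \<Longrightarrow> derivable K \<kappa>"
| comb: "derivable K (f1, b1) \<Longrightarrow> derivable K (f2, b2) \<Longrightarrow> c1 \<ge> 0 \<Longrightarrow> c2 \<ge> 0 \<Longrightarrow>
     derivable K (\<lambda>w. c1 * f1 w + c2 * f2 w, c1 * b1 + c2 * b2)"

lemma derivable_trans:
  assumes "derivable K' \<kappa>" "\<And>\<kappa>'. \<kappa>' \<in> K' \<Longrightarrow> derivable K \<kappa>'"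
  shows "derivable K \<kappa>"
  using assms by (induction rule: derivable.induct) (auto intro: derivable.comb)

lemma derivable_zero_at:
  assumes "derivable K' \<kappa>" "\<And>\<kappa>'. \<kappa>' \<in> K' \<Longrightarrow> fst \<kappa>' v = 0"
  shows "fst \<kappa> v = 0"
  using assms by (induction rule: derivable.induct) auto

definition feas :: "'v set \<Rightarrow> (('v \<Rightarrow> real) \<times> real) set \<Rightarrow> bool" where
  "feas V K \<longleftrightarrow> (\<exists>x. \<forall>\<kappa>\<in>K. (\<Sum>w\<in>V. fst \<kappa> w * x w) \<ge> snd \<kappa>)"

lemma fm:
  fixes V :: "'v set" and K :: "(('v \<Rightarrow> real) \<times> real) set"
  assumes "finite V"
  shows "finite K \<Longrightarrow> \<not> feas V K \<Longrightarrow> \<exists>f b. derivable K (f, b) \<and> (\<forall>v\<in>V. f v = 0) \<and> b > 0"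
  using assms
proof (induction V arbitrary: K rule: finite_induct)
  case empty
  then obtain \<kappa> where "\<kappa> \<in> K" "snd \<kappa> > 0" unfolding feas_def by (auto simp: not_le)
  then show ?case by (intro exI[of _ "fst \<kappa>"] exI[of _ "snd \<kappa>"]) (auto intro: derivable.base)
next
  case (insert v V)
  define Kz where "Kz = {\<kappa>\<in>K. fst \<kappa> v = 0}"
  define Kp where "Kp = {\<kappa>\<in>K. fst \<kappa> v > 0}"
  define Kn where "Kn = {\<kappa>\<in>K. fst \<kappa> v < 0}"
  define cmb where "cmb = (\<lambda>(p::('v \<Rightarrow> real) \<times> real, n::('v \<Rightarrow> real) \<times> real).
      (\<lambda>w. (- fst n v) * fst p w + fst p v * fst n w, (- fst n v) * snd p + fst p v * snd n))"
  define K' where "K' = Kz \<union> cmb ` (Kp \<times> Kn)"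
  have finK': "finite K'" using insert.prems(1) unfolding K'_def Kz_def Kp_def Kn_def by auto
  have der: "derivable K \<kappa>" if "\<kappa> \<in> K'" for \<kappa>
  proof -
    { assume "\<kappa> \<in> Kz" then have ?thesis unfolding Kz_def by (auto intro: derivable.base) }
    moreover
    { fix p n assume pn: "p \<in> Kp" "n \<in> Kn" and k: "\<kappa> = cmb (p, n)"
      obtain fp bp where P: "p = (fp, bp)" by force
      obtain fn bn where N: "n = (fn, bn)" by force
      have "derivable K (\<lambda>w. (- fn v) * fp w + fp v * fn w, (- fn v) * bp + fp v * bn)"
        apply (rule derivable.comb)
        using pn P N unfolding Kp_def Kn_def by (auto intro: derivable.base)
      then have ?thesis using k P N unfolding cmb_def by simp }
    ultimately show ?thesis using that unfolding K'_def by blast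
  qed
  have zero: "fst \<kappa> v = 0" if "\<kappa> \<in> K'" for \<kappa>
    using that unfolding K'_def Kz_def cmb_def by (auto simp: algebra_simps)
  have "\<not> feas V K'"
  proof
    assume "feas V K'"
    then obtain x where x: "\<And>\<kappa>. \<kappa> \<in> K' \<Longrightarrow> (\<Sum>w\<in>V. fst \<kappa> w * x w) \<ge> snd \<kappa>"
      unfolding feas_def by blast
    define s where "s = (\<lambda>\<kappa>::('v \<Rightarrow> real) \<times> real. \<Sum>w\<in>V. fst \<kappa> w * x w)"
    define lo where "lo = (\<lambda>\<kappa>::('v \<Rightarrow> real) \<times> real. (snd \<kappa> - s \<kappa>) / fst \<kappa> v)"
    have lohi: "lo p \<le> lo n" if "p \<in> Kp" "n \<in> Kn" for p n
    proof -
      have "cmb (p,n) \<in> K'" using that unfolding K'_def by auto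
      from x[OF this] have "(\<Sum>w\<in>V. ((- fst n v) * fst p w + fst p v * fst n w) * x w) \<ge> (- fst n v) * snd p + fst p v * snd n"
        unfolding cmb_def by simp
      also have "(\<Sum>w\<in>V. ((- fst n v) * fst p w + fst p v * fst n w) * x w) = (- fst n v) * s p + fst p v * s n"
        unfolding s_def sum_distrib_left sum.distrib[symmetric] by (rule sum.cong) (simp_all add: algebra_simps)
      finally have *: "(- fst n v) * snd p + fst p v * snd n \<le> (- fst n v) * s p + fst p v * s n" .
      have pv: "fst p v > 0" and nv: "fst n v < 0" using that unfolding Kp_def Kn_def by auto
      have "(snd p - s p) * fst n v \<ge> (snd n - s n) * fst p v" using * by (simp add: algebra_simps)
      then show ?thesis unfolding lo_def using pv nv by (simp add: divide_simps mult.commute)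
    qed
    define t where "t = (if Kp \<noteq> {} then Max (lo ` Kp) else if Kn \<noteq> {} then Min (lo ` Kn) else 0)"
    have finKp: "finite Kp" "finite Kn" using insert.prems(1) unfolding Kp_def Kn_def by auto
    have tlo: "lo p \<le> t" if "p \<in> Kp" for p
      using that finKp unfolding t_def by auto
    have thi: "t \<le> lo n" if "n \<in> Kn" for n
    proof (cases "Kp = {}")
      case True then show ?thesis using that finKp unfolding t_def by auto
    next
      case False
      then have "Max (lo ` Kp) \<in> lo ` Kp" using finKp by auto
      then obtain p where "p \<in> Kp" "Max (lo ` Kp) = lo p" by auto
      then show ?thesis using lohi[OF _ that] False unfolding t_def by auto
    qed
    define x' where "x' = x(v := t)"
    have sx: "(\<Sum>w\<in>insert v V. fst \<kappa> w * x' w) = fst \<kappa> v * t + s \<kappa>" for \<kappa>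
    proof -
      have "(\<Sum>w\<in>V. fst \<kappa> w * x' w) = s \<kappa>" unfolding s_def x'_def
        using insert.hyps(2) by (intro sum.cong) auto
      then show ?thesis using insert.hyps by (simp add: x'_def)
    qed
    have "feas (insert v V) K"
      unfolding feas_def
    proof (intro exI[of _ x'] ballI)
      fix \<kappa> assume k: "\<kappa> \<in> K"
      consider "\<kappa> \<in> Kz" | "\<kappa> \<in> Kp" | "\<kappa> \<in> Kn" using k unfolding Kz_def Kp_def Kn_def
        by (metis (mono_tags, lifting) linorder_neqE_linordered_idom mem_Collect_eq)
      then show "snd \<kappa> \<le> (\<Sum>w\<in>insert v V. fst \<kappa> w * x' w)"
      proof cases
        case 1
        then have "\<kappa> \<in> K'" unfolding K'_def by auto
        from x[OF this] 1 show ?thesis unfolding sx s_def Kz_def by simp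
      next
        case 2
        then have pv: "fst \<kappa> v > 0" unfolding Kp_def by auto
        have "lo \<kappa> \<le> t" using tlo 2 by auto
        then have "snd \<kappa> - s \<kappa> \<le> t * fst \<kappa> v" unfolding lo_def using pv by (simp add: divide_simps)
        then show ?thesis unfolding sx by (simp add: algebra_simps)
      next
        case 3
        then have nv: "fst \<kappa> v < 0" unfolding Kn_def by auto
        have "t \<le> lo \<kappa>" using thi 3 by auto
        then have "snd \<kappa> - s \<kappa> \<le> t * fst \<kappa> v" unfolding lo_def using nv by (simp add: divide_simps)
        then show ?thesis unfolding sx by (simp add: algebra_simps)
      qed
    qed
    with insert.prems(2) show False by simp
  qed
  from insert.IH[OF finK' this] obtain f b where fb: "derivable K' (f, b)" "\<forall>v\<in>V. f v = 0" "b > 0"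
    by blast
  have "derivable K (f, b)" using derivable_trans[OF fb(1) der] .
  moreover have "f v = 0" using derivable_zero_at[OF fb(1) zero] by simp
  ultimately show ?case using fb by auto
qed

lemma sum_ind:
  assumes "finite L" "l \<in> L"
  shows "(\<Sum>la\<in>L. (if la = l then 1 else 0) * h la) = (h l :: real)"
proof -
  have "(\<Sum>la\<in>L. (if la = l then 1 else 0) * h la) = (\<Sum>la\<in>L. if la = l then h la else 0)"
    by (rule sum.cong) auto
  then show ?thesis using assms by simp
qed

lemma derivable_sum:
  assumes "derivable ((\<lambda>l. (F l, B l)) ` L) \<kappa>" "finite L"
  shows "\<exists>y. (\<forall>l\<in>L. y l \<ge> (0::real)) \<and> (\<forall>w. fst \<kappa> w = (\<Sum>l\<in>L. y l * F l w))
           \<and> snd \<kappa> = (\<Sum>l\<in>L. y l * B l)"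
  using assms
proof (induction rule: derivable.induct)
  case (base \<kappa>)
  then obtain l where l: "l \<in> L" "\<kappa> = (F l, B l)" by auto
  show ?case
    by (intro exI[of _ "\<lambda>l'. if l' = l then 1 else 0"]) (use l base.prems in \<open>auto simp: sum_ind\<close>)
next
  case (comb f1 b1 f2 b2 c1 c2)
  then obtain y1 y2 where y1: "\<forall>l\<in>L. y1 l \<ge> 0" "\<forall>w. f1 w = (\<Sum>l\<in>L. y1 l * F l w)" "b1 = (\<Sum>l\<in>L. y1 l * B l)"
    and y2: "\<forall>l\<in>L. y2 l \<ge> 0" "\<forall>w. f2 w = (\<Sum>l\<in>L. y2 l * F l w)" "b2 = (\<Sum>l\<in>L. y2 l * B l)"
    by auto
  show ?case
    by (intro exI[of _ "\<lambda>l. c1 * y1 l + c2 * y2 l"])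
       (use y1 y2 comb.hyps in \<open>auto simp: distrib_right sum.distrib sum_distrib_left mult.assoc\<close>)
qed

lemma farkas:
  fixes F :: "'l \<Rightarrow> 'v \<Rightarrow> real" and B :: "'l \<Rightarrow> real"
  assumes "finite V" "finite L" "\<not> (\<exists>x. \<forall>l\<in>L. (\<Sum>v\<in>V. F l v * x v) \<ge> B l)"
  shows "\<exists>y. (\<forall>l\<in>L. y l \<ge> 0) \<and> (\<forall>v\<in>V. (\<Sum>l\<in>L. y l * F l v) = 0) \<and> (\<Sum>l\<in>L. y l * B l) > 0"
proof -
  let ?K = "(\<lambda>l. (F l, B l)) ` L"
  have "\<not> feas V ?K" using assms(3) unfolding feas_def by auto
  from fm[OF assms(1) _ this] assms(2) obtain f b where
    fb: "derivable ?K (f,b)" "\<forall>v\<in>V. f v = 0" "b > 0" by auto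
  from derivable_sum[OF fb(1) assms(2)] obtain y where
    "\<forall>l\<in>L. y l \<ge> 0" "\<forall>w. f w = (\<Sum>l\<in>L. y l * F l w)" "b = (\<Sum>l\<in>L. y l * B l)" by auto
  then show ?thesis using fb by (intro exI[of _ y]) auto
qed

lemma weak_dual:
  assumes "\<forall>l\<in>L. y l \<ge> (0::real)" "\<forall>l\<in>L. (\<Sum>v\<in>V. F l v * x v) \<ge> B l"
  shows "(\<Sum>l\<in>L. y l * B l) \<le> (\<Sum>v\<in>V. (\<Sum>l\<in>L. y l * F l v) * x v)"
proof -
  have "(\<Sum>l\<in>L. y l * B l) \<le> (\<Sum>l\<in>L. y l * (\<Sum>v\<in>V. F l v * x v))"
    using assms by (intro sum_mono mult_left_mono) auto
  also have "\<dots> = (\<Sum>v\<in>V. (\<Sum>l\<in>L. y l * F l v) * x v)"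
    by (simp add: sum_distrib_left sum_distrib_right mult.assoc sum.swap[of _ L])
  finally show ?thesis .
qed

lemma farkas_affine:
  fixes F :: "'l \<Rightarrow> 'v \<Rightarrow> real" and B :: "'l \<Rightarrow> real"
  assumes "finite V" "finite L" and x0: "\<forall>l\<in>L. (\<Sum>v\<in>V. F l v * x0 v) \<ge> B l"
    and bnd: "\<And>x. \<forall>l\<in>L. (\<Sum>v\<in>V. F l v * x v) \<ge> B l \<Longrightarrow> (\<Sum>v\<in>V. c v * x v) \<ge> \<gamma>"
    and eps: "\<epsilon> > 0"
  shows "\<exists>y. (\<forall>l\<in>L. y l \<ge> 0) \<and> (\<forall>v\<in>V. (\<Sum>l\<in>L. y l * F l v) = c v) \<and> (\<Sum>l\<in>L. y l * B l) > \<gamma> - \<epsilon>"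
proof -
  define L' where "L' = insert None (Some ` L)"
  define F' where "F' = (\<lambda>oi v. case oi of None \<Rightarrow> - c v | Some l \<Rightarrow> F l v)"
  define B' where "B' = (\<lambda>oi. case oi of None \<Rightarrow> \<epsilon> - \<gamma> | Some l \<Rightarrow> B l)"
  have sumL': "(\<Sum>oi\<in>L'. h oi) = h None + (\<Sum>l\<in>L. h (Some l))" for h :: "_ \<Rightarrow> real"
    unfolding L'_def using assms(2) by (simp add: sum.reindex)
  have finL': "finite L'" unfolding L'_def using assms(2) by auto
  have "\<not> (\<exists>x. \<forall>oi\<in>L'. (\<Sum>v\<in>V. F' oi v * x v) \<ge> B' oi)"
  proof
    assume "\<exists>x. \<forall>oi\<in>L'. (\<Sum>v\<in>V. F' oi v * x v) \<ge> B' oi"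
    then obtain x where hx: "\<forall>oi\<in>L'. (\<Sum>v\<in>V. F' oi v * x v) \<ge> B' oi" by blast
    have "\<forall>l\<in>L. (\<Sum>v\<in>V. F l v * x v) \<ge> B l"
    proof
      fix l assume "l \<in> L"
      then have "Some l \<in> L'" unfolding L'_def by auto
      with hx show "(\<Sum>v\<in>V. F l v * x v) \<ge> B l" unfolding F'_def B'_def by auto
    qed
    from bnd[OF this] have "(\<Sum>v\<in>V. c v * x v) \<ge> \<gamma>" .
    moreover have "(\<Sum>v\<in>V. - c v * x v) \<ge> \<epsilon> - \<gamma>"
      using hx unfolding L'_def F'_def B'_def by auto
    ultimately show False using eps by (simp add: sum_negf)
  qed
  from farkas[OF assms(1) finL' this] obtain y' where
    y': "\<forall>oi\<in>L'. y' oi \<ge> 0" "\<forall>v\<in>V. (\<Sum>oi\<in>L'. y' oi * F' oi v) = 0" "(\<Sum>oi\<in>L'. y' oi * B' oi) > 0"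
    by blast
  define y0 where "y0 = y' None"
  have y0: "y0 \<ge> 0" using y' unfolding y0_def L'_def by auto
  have yS: "\<forall>l\<in>L. y' (Some l) \<ge> 0" using y'(1) unfolding L'_def by auto
  have coef: "(\<Sum>l\<in>L. y' (Some l) * F l v) = y0 * c v" if "v \<in> V" for v
    using y'(2) that unfolding sumL' F'_def y0_def by auto
  have obj: "(\<Sum>l\<in>L. y' (Some l) * B l) > y0 * (\<gamma> - \<epsilon>)"
    using y'(3) unfolding sumL' B'_def y0_def by (auto simp: algebra_simps)
  have wd: "(\<Sum>l\<in>L. y' (Some l) * B l) \<le> (\<Sum>v\<in>V. (\<Sum>l\<in>L. y' (Some l) * F l v) * x0 v)"
    using weak_dual[OF yS x0] .
  have "y0 \<noteq> 0"
  proof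
    assume "y0 = 0"
    then have "(\<Sum>v\<in>V. (\<Sum>l\<in>L. y' (Some l) * F l v) * x0 v) = 0" using coef by simp
    with wd obj \<open>y0 = 0\<close> show False by simp
  qed
  with y0 have y0p: "y0 > 0" by simp
  show ?thesis
  proof (intro exI[of _ "\<lambda>l. y' (Some l) / y0"] conjI ballI)
    fix l assume "l \<in> L" then show "y' (Some l) / y0 \<ge> 0" using yS y0p by auto
  next
    fix v assume "v \<in> V"
    have "(\<Sum>l\<in>L. y' (Some l) / y0 * F l v) = (\<Sum>l\<in>L. y' (Some l) * F l v) / y0"
      by (simp add: sum_divide_distrib)
    then show "(\<Sum>l\<in>L. y' (Some l) / y0 * F l v) = c v" using coef[OF \<open>v \<in> V\<close>] y0p by simp
  next
    have "(\<Sum>l\<in>L. y' (Some l) / y0 * B l) = (\<Sum>l\<in>L. y' (Some l) * B l) / y0"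
      by (simp add: sum_divide_distrib)
    then show "(\<Sum>l\<in>L. y' (Some l) / y0 * B l) > \<gamma> - \<epsilon>" using obj y0p
      by (simp add: pos_less_divide_eq mult.commute)
  qed
qed



fun Fc :: "('a \<Rightarrow> 'g \<Rightarrow> 'c \<Rightarrow> real) \<Rightarrow> ('a \<times> 'c) + ('a \<times> 'g) + 'g \<Rightarrow> 'a \<times> 'g \<Rightarrow> real" where
  "Fc a (Inl (i,k)) (i',j) = (if i' = i then a i j k else 0)"
| "Fc a (Inr (Inl (i,j))) (i',j') = (if i' = i \<and> j' = j then 1 else 0)"
| "Fc a (Inr (Inr j)) (i',j') = (if j' = j then -1 else 0)"

fun Bc :: "('a \<Rightarrow> 'c \<Rightarrow> real) \<Rightarrow> ('a \<times> 'c) + ('a \<times> 'g) + 'g \<Rightarrow> real" where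
  "Bc r (Inl (i,k)) = r i k"
| "Bc r (Inr (Inl _)) = 0"
| "Bc r (Inr (Inr _)) = -1"

lemma sum_prod: "(\<Sum>v\<in>X\<times>Y. h v) = (\<Sum>i\<in>X. \<Sum>j\<in>Y. h (i,j))"
  by (simp add: sum.cartesian_product)

lemma sum_L:
  assumes "finite A" "finite G" "finite C"
  shows "(\<Sum>l\<in>(A\<times>C) <+> ((A\<times>G) <+> G). h l) =
    (\<Sum>i\<in>A. \<Sum>k\<in>C. h (Inl (i,k))) + (\<Sum>i\<in>A. \<Sum>j\<in>G. h (Inr (Inl (i,j)))) + (\<Sum>j\<in>G. h (Inr (Inr j)))"
  using assms by (simp add: sum.Plus sum_prod add.assoc)

lemma delta1: "finite S \<Longrightarrow> (\<Sum>j\<in>S. (if j = j0 then 1 else 0) * h j) = (if j0 \<in> S then h j0 else (0::real))"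
  by (simp add: if_distrib[of "\<lambda>c. c * _"] cong: if_cong)
lemma delta2: "finite S \<Longrightarrow> (\<Sum>j\<in>S. h j * (if j0 = j then 1 else 0)) = (if j0 \<in> S then h j0 else (0::real))"
  by (simp add: if_distrib[of "\<lambda>c. _ * c"] cong: if_cong)
lemma delta3: "finite S \<Longrightarrow> (\<Sum>j\<in>S. (if j0 = j then 1 else 0) * h j) = (if j0 \<in> S then h j0 else (0::real))"
  by (simp add: if_distrib[of "\<lambda>c. c * _"] cong: if_cong)
lemma delta4: "finite S \<Longrightarrow> (\<Sum>j\<in>S. h j * (if j = j0 then 1 else 0)) = (if j0 \<in> S then h j0 else (0::real))"
  by (simp add: if_distrib[of "\<lambda>c. _ * c"] cong: if_cong)

lemma F1:
  assumes "i \<in> A" "finite A"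
  shows "(\<Sum>v\<in>A\<times>G. Fc a (Inl (i,k)) v * x v) = (\<Sum>j\<in>G. a i j k * x (i,j))"
proof -
  have "(\<Sum>v\<in>A\<times>G. Fc a (Inl (i,k)) v * x v) = (\<Sum>i'\<in>A. if i' = i then (\<Sum>j\<in>G. a i j k * x (i,j)) else 0)"
    unfolding sum_prod by (rule sum.cong) auto
  then show ?thesis using assms by simp
qed

lemma F2:
  assumes "i \<in> A" "j \<in> G" "finite A" "finite G"
  shows "(\<Sum>v\<in>A\<times>G. Fc a (Inr (Inl (i,j))) v * x v) = x (i,j)"
proof -
  have "(\<Sum>v\<in>A\<times>G. Fc a (Inr (Inl (i,j))) v * x v) = (\<Sum>i'\<in>A. if i' = i then x (i,j) else 0)"
    unfolding sum_prod by (rule sum.cong) (use assms in \<open>auto simp: delta1 delta2 delta3 delta4\<close>)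
  then show ?thesis using assms by simp
qed

lemma F3:
  assumes "j \<in> G" "finite A" "finite G"
  shows "(\<Sum>v\<in>A\<times>G. Fc a (Inr (Inr j)) v * x v) = - (\<Sum>i\<in>A. x (i,j))"
proof -
  have "(\<Sum>v\<in>A\<times>G. Fc a (Inr (Inr j)) v * x v) = (\<Sum>i\<in>A. (\<Sum>j'\<in>G. if j' = j then - x (i,j) else 0))"
    unfolding sum_prod by (intro sum.cong refl) auto
  then show ?thesis using assms by (simp add: sum_negf)
qed

lemma coefL:
  assumes "finite A" "finite G" "finite C" "i \<in> A" "j \<in> G"
  shows "(\<Sum>l\<in>(A\<times>C) <+> ((A\<times>G) <+> G). y l * Fc a l (i,j)) =
     (\<Sum>k\<in>C. y (Inl (i,k)) * a i j k) + y (Inr (Inl (i,j))) - y (Inr (Inr j))"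
proof -
  have 1: "(\<Sum>i'\<in>A. \<Sum>k\<in>C. y (Inl (i',k)) * Fc a (Inl (i',k)) (i,j)) = (\<Sum>k\<in>C. y (Inl (i,k)) * a i j k)"
  proof -
    have "(\<Sum>i'\<in>A. \<Sum>k\<in>C. y (Inl (i',k)) * Fc a (Inl (i',k)) (i,j)) = (\<Sum>i'\<in>A. if i' = i then (\<Sum>k\<in>C. y (Inl (i,k)) * a i j k) else 0)"
      by (intro sum.cong) auto
    then show ?thesis using assms by simp
  qed
  have 2: "(\<Sum>i'\<in>A. \<Sum>j'\<in>G. y (Inr (Inl (i',j'))) * Fc a (Inr (Inl (i',j'))) (i,j)) = y (Inr (Inl (i,j)))"
  proof -
    have "(\<Sum>i'\<in>A. \<Sum>j'\<in>G. y (Inr (Inl (i',j'))) * Fc a (Inr (Inl (i',j'))) (i,j)) = (\<Sum>i'\<in>A. if i' = i then y (Inr (Inl (i,j))) else 0)"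
      by (rule sum.cong) (use assms in \<open>auto simp: delta1 delta2 delta3 delta4\<close>)
    then show ?thesis using assms by simp
  qed
  have 3: "(\<Sum>j'\<in>G. y (Inr (Inr j')) * Fc a (Inr (Inr j')) (i,j)) = - y (Inr (Inr j))"
  proof -
    have "(\<Sum>j'\<in>G. y (Inr (Inr j')) * Fc a (Inr (Inr j')) (i,j)) = (\<Sum>j'\<in>G. if j' = j then - y (Inr (Inr j)) else 0)"
      by (intro sum.cong) auto
    then show ?thesis using assms by simp
  qed
  show ?thesis unfolding sum_L[OF assms(1-3)] 1 2 3 by simp
qed

lemma objL:
  assumes "finite A" "finite G" "finite C"
  shows "(\<Sum>l\<in>(A\<times>C) <+> ((A\<times>G) <+> G). y l * Bc r l) =
     (\<Sum>i\<in>A. \<Sum>k\<in>C. r i k * y (Inl (i,k))) - (\<Sum>j\<in>G. y (Inr (Inr j)))"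
  unfolding sum_L[OF assms] by (simp add: sum_negf mult.commute)

lemma feasL:
  assumes fin: "finite A" "finite G" "finite C"
  shows "(\<forall>l\<in>(A\<times>C) <+> ((A\<times>G) <+> G). (\<Sum>v\<in>A\<times>G. Fc a l v * x v) \<ge> Bc r l)
     \<longleftrightarrow> LP_feasible A G C a r (\<lambda>i j. x (i,j))"
proof
  assume H: "\<forall>l\<in>(A\<times>C) <+> ((A\<times>G) <+> G). (\<Sum>v\<in>A\<times>G. Fc a l v * x v) \<ge> Bc r l"
  have h1: "r i k \<le> (\<Sum>j\<in>G. a i j k * x (i,j))" if "i \<in> A" "k \<in> C" for i k
    using H[rule_format, of "Inl (i,k)"] that fin by (simp add: F1 Plus_def)
  have h2: "0 \<le> x (i,j)" if "i \<in> A" "j \<in> G" for i j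
    using H[rule_format, of "Inr (Inl (i,j))"] that fin by (simp add: F2 Plus_def)
  have h3: "(\<Sum>i\<in>A. x (i,j)) \<le> 1" if "j \<in> G" for j
    using H[rule_format, of "Inr (Inr j)"] that fin by (simp add: F3 Plus_def)
  show "LP_feasible A G C a r (\<lambda>i j. x (i,j))"
    using h1 h2 h3 by (auto simp: LP_feasible_def admissible_for_def nonneg_alloc_def supply_respecting_def CC_def)
next
  assume "LP_feasible A G C a r (\<lambda>i j. x (i,j))"
  then show "\<forall>l\<in>(A\<times>C) <+> ((A\<times>G) <+> G). (\<Sum>v\<in>A\<times>G. Fc a l v * x v) \<ge> Bc r l"
    using fin
    by (auto simp: LP_feasible_def admissible_for_def nonneg_alloc_def supply_respecting_def CC_def
      F1 F2 F3 Plus_def)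
qed


lemma LP_obj_sum: "LP_obj A G d lam (\<lambda>i j. x (i,j)) = (\<Sum>v\<in>A\<times>G. (case v of (i,j) \<Rightarrow> lam i * d i j) * x v)"
  unfolding LP_obj_def sum_prod by (simp add: sum_distrib_left mult.assoc)

lemma dual_approx:
  assumes fin: "finite A" "finite G" "finite C" and opt: "LP_optimal A G C a r d lam X" and eps: "\<epsilon> > 0"
  shows "\<exists>\<beta> q. DLP_feasible A G C a d lam \<beta> q \<and> DLP_obj A G C r \<beta> q > LP_obj A G d lam X - \<epsilon>"
proof -
  let ?L = "(A\<times>C) <+> ((A\<times>G) <+> G)"
  let ?c = "\<lambda>v. case v of (i,j) \<Rightarrow> lam i * d i j"
  have finL: "finite ?L" using fin by auto
  have finV: "finite (A\<times>G)" using fin by auto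
  have x0: "\<forall>l\<in>?L. (\<Sum>v\<in>A\<times>G. Fc a l v * (\<lambda>(i,j). X i j) v) \<ge> Bc r l"
    using feasL[OF fin, where x="\<lambda>(i,j). X i j"] opt unfolding LP_optimal_def by simp
  have bnd: "(\<Sum>v\<in>A\<times>G. ?c v * x v) \<ge> LP_obj A G d lam X"
    if "\<forall>l\<in>?L. (\<Sum>v\<in>A\<times>G. Fc a l v * x v) \<ge> Bc r l" for x
  proof -
    have "LP_feasible A G C a r (\<lambda>i j. x (i,j))" using feasL[OF fin] that by blast
    then have "LP_obj A G d lam X \<le> LP_obj A G d lam (\<lambda>i j. x (i,j))" using opt unfolding LP_optimal_def by blast
    then show ?thesis unfolding LP_obj_sum .
  qed
  from farkas_affine[OF finV finL x0 bnd eps] obtain y where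
    y: "\<forall>l\<in>?L. y l \<ge> 0" "\<forall>v\<in>A\<times>G. (\<Sum>l\<in>?L. y l * Fc a l v) = ?c v"
       "(\<Sum>l\<in>?L. y l * Bc r l) > LP_obj A G d lam X - \<epsilon>"
    by blast
  define \<beta> where "\<beta> i k = y (Inl (i,k))" for i k
  define q where "q j = y (Inr (Inr j))" for j
  have feas: "DLP_feasible A G C a d lam \<beta> q"
    unfolding DLP_feasible_def
  proof (intro conjI ballI)
    fix i j assume ij: "i \<in> A" "j \<in> G"
    have "(\<Sum>k\<in>C. y (Inl (i,k)) * a i j k) + y (Inr (Inl (i,j))) - y (Inr (Inr j)) = lam i * d i j"
      using y(2) ij coefL[OF fin ij, of y a] by auto
    moreover have "y (Inr (Inl (i,j))) \<ge> 0" using y(1) ij by (auto simp: Plus_def)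
    ultimately show "lam i * d i j \<ge> (\<Sum>k\<in>C. a i j k * \<beta> i k) - q j"
      unfolding \<beta>_def q_def by (simp add: mult.commute)
  next
    fix i k assume "i \<in> A" "k \<in> C" then show "\<beta> i k \<ge> 0" using y(1) unfolding \<beta>_def by (auto simp: Plus_def)
  next
    fix j assume "j \<in> G" then show "q j \<ge> 0" using y(1) unfolding q_def by (auto simp: Plus_def)
  qed
  have "DLP_obj A G C r \<beta> q = (\<Sum>l\<in>?L. y l * Bc r l)"
    unfolding objL[OF fin] DLP_obj_def \<beta>_def q_def ..
  with feas y(3) show ?thesis by (intro exI[of _ \<beta>] exI[of _ q]) simp
qed

lemma agent_identity:
  fixes X :: "'a \<Rightarrow> 'g \<Rightarrow> real" and a :: "'a \<Rightarrow> 'g \<Rightarrow> 'c \<Rightarrow> real"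
  shows
  "(\<Sum>j\<in>G. X i j * (lam i * d i j - (\<Sum>k\<in>C. a i j k * \<alpha> i k) + p j)) +
   (\<Sum>k\<in>C. \<alpha> i k * ((\<Sum>j\<in>G. a i j k * X i j) - r i k)) =
   lam i * (\<Sum>j\<in>G. d i j * X i j) - (\<Sum>k\<in>C. r i k * \<alpha> i k) + (\<Sum>j\<in>G. p j * X i j)"
proof -
  have sw: "(\<Sum>j\<in>G. X i j * (\<Sum>k\<in>C. a i j k * \<alpha> i k)) = (\<Sum>k\<in>C. \<alpha> i k * (\<Sum>j\<in>G. a i j k * X i j))"
  proof -
    have "(\<Sum>j\<in>G. X i j * (\<Sum>k\<in>C. a i j k * \<alpha> i k)) = (\<Sum>j\<in>G. \<Sum>k\<in>C. \<alpha> i k * (a i j k * X i j))"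
      by (rule sum.cong[OF refl], subst sum_distrib_left, rule sum.cong[OF refl], simp add: mult_ac)
    also have "\<dots> = (\<Sum>k\<in>C. \<Sum>j\<in>G. \<alpha> i k * (a i j k * X i j))"
      by (rule sum.swap)
    also have "\<dots> = (\<Sum>k\<in>C. \<alpha> i k * (\<Sum>j\<in>G. a i j k * X i j))" by (simp add: sum_distrib_left)
    finally show ?thesis .
  qed
  have "(\<Sum>j\<in>G. X i j * (lam i * d i j - (\<Sum>k\<in>C. a i j k * \<alpha> i k) + p j)) =
      lam i * (\<Sum>j\<in>G. d i j * X i j) - (\<Sum>j\<in>G. X i j * (\<Sum>k\<in>C. a i j k * \<alpha> i k)) + (\<Sum>j\<in>G. p j * X i j)"
    by (simp add: algebra_simps sum.distrib sum_subtractf sum_distrib_left)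
  moreover have "(\<Sum>k\<in>C. \<alpha> i k * ((\<Sum>j\<in>G. a i j k * X i j) - r i k)) =
      (\<Sum>k\<in>C. \<alpha> i k * (\<Sum>j\<in>G. a i j k * X i j)) - (\<Sum>k\<in>C. r i k * \<alpha> i k)"
    by (simp add: algebra_simps sum_subtractf)
  ultimately show ?thesis using sw by simp
qed

lemma comp_slack:
  assumes fin: "finite A" "finite G" "finite C" and opt: "LP_optimal A G C a r d lam X"
    and dopt: "DLP_optimal A G C a r d lam \<alpha> p" and i: "i \<in> A"
  shows "(\<Sum>j\<in>G. p j * X i j) = (\<Sum>k\<in>C. r i k * \<alpha> i k) - lam i * (\<Sum>j\<in>G. d i j * X i j)"
proof -
  define u where "u i = (\<Sum>j\<in>G. X i j * (lam i * d i j - (\<Sum>k\<in>C. a i j k * \<alpha> i k) + p j)) +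
   (\<Sum>k\<in>C. \<alpha> i k * ((\<Sum>j\<in>G. a i j k * X i j) - r i k))" for i
  define z where "z = (\<Sum>j\<in>G. p j * (1 - (\<Sum>i\<in>A. X i j)))"
  have Xf: "LP_feasible A G C a r X" and df: "DLP_feasible A G C a d lam \<alpha> p"
    using opt dopt unfolding LP_optimal_def DLP_optimal_def by auto
  have u_nn: "u i \<ge> 0" if "i \<in> A" for i
  proof -
    have "0 \<le> X i j * (lam i * d i j - (\<Sum>k\<in>C. a i j k * \<alpha> i k) + p j)" if "j \<in> G" for j
    proof -
      have "0 \<le> lam i * d i j - (\<Sum>k\<in>C. a i j k * \<alpha> i k) + p j"
        using df \<open>i \<in> A\<close> that unfolding DLP_feasible_def by force
      moreover have "X i j \<ge> 0" using Xf \<open>i \<in> A\<close> that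
        unfolding LP_feasible_def admissible_for_def nonneg_alloc_def by auto
      ultimately show ?thesis by simp
    qed
    moreover have "0 \<le> \<alpha> i k * ((\<Sum>j\<in>G. a i j k * X i j) - r i k)" if "k \<in> C" for k
    proof -
      have "0 \<le> (\<Sum>j\<in>G. a i j k * X i j) - r i k"
        using Xf \<open>i \<in> A\<close> that unfolding LP_feasible_def admissible_for_def CC_def by force
      moreover have "\<alpha> i k \<ge> 0" using df \<open>i \<in> A\<close> that unfolding DLP_feasible_def by auto
      ultimately show ?thesis by simp
    qed
    ultimately show ?thesis unfolding u_def by (intro add_nonneg_nonneg sum_nonneg) auto
  qed
  have z_nn: "z \<ge> 0"
    using Xf df unfolding z_def LP_feasible_def admissible_for_def supply_respecting_def DLP_feasible_def
    by (intro sum_nonneg mult_nonneg_nonneg) auto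
  have gap: "LP_obj A G d lam X - DLP_obj A G C r \<alpha> p = (\<Sum>i\<in>A. u i) + z"
  proof -
    have "(\<Sum>i\<in>A. u i) = LP_obj A G d lam X - (\<Sum>i\<in>A. \<Sum>k\<in>C. r i k * \<alpha> i k) + (\<Sum>i\<in>A. \<Sum>j\<in>G. p j * X i j)"
      unfolding u_def agent_identity LP_obj_def by (simp add: sum.distrib sum_subtractf)
    moreover have "z = (\<Sum>j\<in>G. p j) - (\<Sum>i\<in>A. \<Sum>j\<in>G. p j * X i j)"
      unfolding z_def by (simp add: algebra_simps sum_subtractf sum_distrib_left sum.swap[of _ A])
    ultimately show ?thesis unfolding DLP_obj_def by simp
  qed
  have "DLP_obj A G C r \<alpha> p \<ge> LP_obj A G d lam X"
  proof (rule field_le_epsilon)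
    fix e :: real assume "e > 0"
    from dual_approx[OF fin opt this] obtain \<beta> q where
      "DLP_feasible A G C a d lam \<beta> q" "DLP_obj A G C r \<beta> q > LP_obj A G d lam X - e" by blast
    with dopt have "DLP_obj A G C r \<alpha> p > LP_obj A G d lam X - e" unfolding DLP_optimal_def
      by (meson less_le_trans)
    then show "LP_obj A G d lam X \<le> DLP_obj A G C r \<alpha> p + e" by simp
  qed
  with gap have "(\<Sum>i\<in>A. u i) + z \<le> 0" by simp
  moreover have "(\<Sum>i\<in>A. u i) \<ge> 0" using u_nn by (simp add: sum_nonneg)
  ultimately have "(\<Sum>i\<in>A. u i) = 0" using z_nn by simp
  then have "u i = 0" using sum_nonneg_eq_0_iff[OF fin(1)] u_nn i by blast
  then show ?thesis unfolding u_def agent_identity by simp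
qed



lemma abel:
  fixes lam E :: "'a \<Rightarrow> real"
  assumes "finite A" "\<forall>i\<in>A. lam i > 0" "\<forall>t\<in>lam`A. (\<Sum>i\<in>{i\<in>A. t \<le> lam i}. E i) \<ge> 0"
  shows "(\<Sum>i\<in>A. lam i * E i) \<ge> 0 \<and>
    ((\<exists>t\<in>lam`A. (\<Sum>i\<in>{i\<in>A. t \<le> lam i}. E i) > 0) \<longrightarrow> (\<Sum>i\<in>A. lam i * E i) > 0)"
  using assms
proof (induction "card A" arbitrary: A lam rule: less_induct)
  case less
  show ?case
  proof (cases "A = {}")
    case True then show ?thesis by simp
  next
    case False
    define m where "m = Min (lam ` A)"
    have mA: "m \<in> lam ` A" using False less.prems(1) by (simp add: m_def)
    have mle: "m \<le> lam i" if "i\<in>A" for i using less.prems(1) that m_def by simp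
    have mpos: "m > 0" using mA less.prems(2) by auto
    define A' where "A' = {i\<in>A. m < lam i}"
    define lam' where "lam' i = lam i - m" for i
    have sub: "A' \<subset> A" using mA unfolding A'_def by auto
    have cardlt: "card A' < card A" using psubset_card_mono[OF less.prems(1) sub] .
    have finA': "finite A'" using less.prems(1) unfolding A'_def by auto
    have pos': "\<forall>i\<in>A'. lam' i > 0" unfolding A'_def lam'_def by auto
    have Tset: "{i\<in>A'. t' \<le> lam' i} = {i\<in>A. t' + m \<le> lam i}" if "t' > 0" for t'
      using that unfolding A'_def lam'_def by auto
    have hyp': "\<forall>t\<in>lam'`A'. (\<Sum>i\<in>{i\<in>A'. t \<le> lam' i}. E i) \<ge> 0"
    proof
      fix t assume "t \<in> lam'`A'"
      then obtain i0 where i0: "i0 \<in> A'" "t = lam' i0" by auto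
      then have "t > 0" using pos' by auto
      moreover have "t + m \<in> lam ` A" using i0 unfolding A'_def lam'_def by auto
      ultimately show "(\<Sum>i\<in>{i\<in>A'. t \<le> lam' i}. E i) \<ge> 0" using less.prems(3) Tset by auto
    qed
    have IH: "(\<Sum>i\<in>A'. lam' i * E i) \<ge> 0 \<and>
      ((\<exists>t\<in>lam'`A'. (\<Sum>i\<in>{i\<in>A'. t \<le> lam' i}. E i) > 0) \<longrightarrow> (\<Sum>i\<in>A'. lam' i * E i) > 0)"
      using less.hyps[OF cardlt finA' pos' hyp'] .
    have TA: "{i\<in>A. m \<le> lam i} = A" using mle by auto
    have SE: "(\<Sum>i\<in>A. E i) \<ge> 0" using less.prems(3) mA TA by force
    have dec: "(\<Sum>i\<in>A. lam i * E i) = m * (\<Sum>i\<in>A. E i) + (\<Sum>i\<in>A'. lam' i * E i)"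
    proof -
      have "(\<Sum>i\<in>A. lam i * E i) = (\<Sum>i\<in>A. m * E i + lam' i * E i)"
        unfolding lam'_def by (rule sum.cong) (auto simp: algebra_simps)
      also have "\<dots> = m * (\<Sum>i\<in>A. E i) + (\<Sum>i\<in>A. lam' i * E i)"
        by (simp add: sum.distrib sum_distrib_left)
      also have "(\<Sum>i\<in>A. lam' i * E i) = (\<Sum>i\<in>A'. lam' i * E i)"
      proof (rule sum.mono_neutral_right[OF less.prems(1)])
        show "A' \<subseteq> A" using sub by auto
        show "\<forall>i\<in>A - A'. lam' i * E i = 0"
          using mle unfolding A'_def lam'_def by force
      qed
      finally show ?thesis .
    qed
    have nn: "(\<Sum>i\<in>A. lam i * E i) \<ge> 0" unfolding dec using IH SE mpos by simp
    moreover have "(\<Sum>i\<in>A. lam i * E i) > 0"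
      if "\<exists>t\<in>lam`A. (\<Sum>i\<in>{i\<in>A. t \<le> lam i}. E i) > 0"
    proof -
      from that obtain i0 where i0: "i0 \<in> A" "(\<Sum>i\<in>{i\<in>A. lam i0 \<le> lam i}. E i) > 0" by auto
      show ?thesis
      proof (cases "lam i0 = m")
        case True
        then have "(\<Sum>i\<in>A. E i) > 0" using i0 TA by simp
        then show ?thesis unfolding dec using IH mpos by (simp add: add_pos_nonneg)
      next
        case False
        then have "m < lam i0" using mle[OF i0(1)] by simp
        then have "i0 \<in> A'" "lam' i0 > 0" using i0 unfolding A'_def lam'_def by auto
        moreover have "{i\<in>A'. lam' i0 \<le> lam' i} = {i\<in>A. lam i0 \<le> lam i}"
          using Tset[OF \<open>lam' i0 > 0\<close>] unfolding lam'_def by simp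
        ultimately have "(\<Sum>i\<in>A'. lam' i * E i) > 0" using IH i0 by force
        then show ?thesis unfolding dec using SE mpos by (simp add: add_nonneg_pos)
      qed
    qed
    ultimately show ?thesis by blast
  qed
qed

lemma admissible_mono:
  "S' \<subseteq> S \<Longrightarrow> admissible_for A G C a r S X \<Longrightarrow> admissible_for A G C a r S' X"
  unfolding admissible_for_def by auto

lemma jo_empty: "jointly_optimal A G C a r d {} (\<lambda>_ _. 0)"
  unfolding jointly_optimal_def admissible_for_def nonneg_alloc_def supply_respecting_def delay_def
  by auto

lemma construct:
  fixes lam :: "'a \<Rightarrow> real"
  assumes fin: "finite A" and ext: "extensibility A G C a r d"
  shows "\<exists>Y. LP_feasible A G C a r Y \<and> (\<forall>t. jointly_optimal A G C a r d {i\<in>A. t \<le> lam i} Y)"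
proof -
  have "\<exists>U Y. U \<subseteq> A \<and> card U = n \<and> (\<forall>j\<in>U. \<forall>k\<in>A-U. lam k \<le> lam j) \<and>
      jointly_optimal A G C a r d U Y \<and>
      (\<forall>t. {i\<in>A. t \<le> lam i} \<subseteq> U \<longrightarrow> jointly_optimal A G C a r d {i\<in>A. t \<le> lam i} Y)"
    if "n \<le> card A" for n
    using that
  proof (induction n)
    case 0
    have "jointly_optimal A G C a r d {i\<in>A. t \<le> lam i} (\<lambda>_ _. 0)" if "{i\<in>A. t \<le> lam i} \<subseteq> {}" for t
    proof -
      have e: "{i\<in>A. t \<le> lam i} = {}" using that by blast
      show ?thesis unfolding e by (rule jo_empty)
    qed
    then show ?case
      by (intro exI[of _ "{}"] exI[of _ "\<lambda>_ _. 0"]) (simp add: jo_empty)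
  next
    case (Suc n)
    then obtain U Y where U: "U \<subseteq> A" "card U = n" "\<forall>j\<in>U. \<forall>k\<in>A-U. lam k \<le> lam j"
      "jointly_optimal A G C a r d U Y"
      "\<forall>t. {i\<in>A. t \<le> lam i} \<subseteq> U \<longrightarrow> jointly_optimal A G C a r d {i\<in>A. t \<le> lam i} Y"
      by auto
    have "U \<noteq> A" using U(2) Suc.prems by auto
    then have psub: "U \<subset> A" using U(1) by auto
    then have ne: "A - U \<noteq> {}" by auto
    have finD: "finite (A - U)" using fin by auto
    have "Max (lam ` (A - U)) \<in> lam ` (A - U)" using ne finD by auto
    then obtain i where i: "i \<in> A - U" "lam i = Max (lam ` (A - U))" by auto
    have imax: "\<forall>k\<in>A-U. lam k \<le> lam i" using i finD by auto
    from ext[unfolded extensibility_def, rule_format, OF psub U(4) i(1)] obtain Y' where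
      Y': "jointly_optimal A G C a r d (insert i U) Y'"
      "\<forall>i'\<in>U. (\<Sum>j\<in>G. d i' j * Y' i' j) = (\<Sum>j\<in>G. d i' j * Y i' j)" by blast
    show ?case
    proof (intro exI[of _ "insert i U"] exI[of _ Y'] conjI allI impI)
      show "insert i U \<subseteq> A" using U(1) i by auto
      show "card (insert i U) = Suc n" using U(1,2) i fin by (simp add: finite_subset)
      show "\<forall>j\<in>insert i U. \<forall>k\<in>A - insert i U. lam k \<le> lam j"
        using U(3) imax by auto
      show "jointly_optimal A G C a r d (insert i U) Y'" by (rule Y'(1))
    next
      fix t assume Tsub: "{i\<in>A. t \<le> lam i} \<subseteq> insert i U"
      show "jointly_optimal A G C a r d {i\<in>A. t \<le> lam i} Y'"
      proof (cases "t \<le> lam i")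
        case True
        have "U \<subseteq> {i\<in>A. t \<le> lam i}" using U(1,3) i True by force
        then have "{i\<in>A. t \<le> lam i} = insert i U" using Tsub i True by auto
        then show ?thesis using Y'(1) by simp
      next
        case False
        then have TU: "{i\<in>A. t \<le> lam i} \<subseteq> U" using Tsub by auto
        then have jY: "jointly_optimal A G C a r d {i\<in>A. t \<le> lam i} Y" using U(5) by auto
        have adm: "admissible_for A G C a r {i\<in>A. t \<le> lam i} Y'"
          using Y'(1) TU unfolding jointly_optimal_def by (meson admissible_mono subset_insertI2)
        have "delay G d {i\<in>A. t \<le> lam i} Y' = delay G d {i\<in>A. t \<le> lam i} Y"
          unfolding delay_def by (rule sum.cong[OF refl]) (use TU Y'(2) in blast)
        then show ?thesis using jY adm unfolding jointly_optimal_def by simp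
      qed
    qed
  qed
  from this[OF order_refl] obtain U Y where U: "U \<subseteq> A" "card U = card A"
    "jointly_optimal A G C a r d U Y"
    "\<forall>t. {i\<in>A. t \<le> lam i} \<subseteq> U \<longrightarrow> jointly_optimal A G C a r d {i\<in>A. t \<le> lam i} Y" by blast
  have "U = A" using card_subset_eq[OF fin U(1) U(2)] .
  then show ?thesis using U unfolding jointly_optimal_def LP_feasible_def by auto
qed

lemma part1:
  assumes fin: "finite A" and ext: "extensibility A G C a r d"
    and lam_pos: "\<forall>i\<in>A. lam i > 0" and opt: "LP_optimal A G C a r d lam X"
    and t: "t \<in> lam ` A"
  shows "jointly_optimal A G C a r d {i\<in>A. t \<le> lam i} X"
proof -
  obtain Y where Y: "LP_feasible A G C a r Y" "\<forall>t. jointly_optimal A G C a r d {i\<in>A. t \<le> lam i} Y"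
    using construct[OF fin ext] by blast
  define E where "E i = (\<Sum>j\<in>G. d i j * X i j) - (\<Sum>j\<in>G. d i j * Y i j)" for i
  have XA: "admissible_for A G C a r A X" using opt unfolding LP_optimal_def LP_feasible_def by auto
  have XT: "admissible_for A G C a r {i\<in>A. t \<le> lam i} X" for t
    using admissible_mono[OF _ XA] by auto
  have sumE: "(\<Sum>i\<in>{i\<in>A. t \<le> lam i}. E i) = delay G d {i\<in>A. t \<le> lam i} X - delay G d {i\<in>A. t \<le> lam i} Y" for t
    unfolding E_def delay_def by (simp add: sum_subtractf)
  have ge: "(\<Sum>i\<in>{i\<in>A. t \<le> lam i}. E i) \<ge> 0" for t
    using Y(2) XT unfolding sumE jointly_optimal_def by (simp add: le_diff_eq)
  have objdiff: "(\<Sum>i\<in>A. lam i * E i) = LP_obj A G d lam X - LP_obj A G d lam Y"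
    unfolding E_def LP_obj_def by (simp add: sum_subtractf right_diff_distrib)
  have "LP_obj A G d lam X \<le> LP_obj A G d lam Y" using opt Y(1) unfolding LP_optimal_def by auto
  then have "\<not> (\<Sum>i\<in>A. lam i * E i) > 0" unfolding objdiff by simp
  with abel[OF fin lam_pos, of E] ge t have "\<not> (\<Sum>i\<in>{i\<in>A. t \<le> lam i}. E i) > 0" by blast
  with ge[of t] have eq: "delay G d {i\<in>A. t \<le> lam i} X = delay G d {i\<in>A. t \<le> lam i} Y"
    unfolding sumE by simp
  show ?thesis using Y(2) XT eq unfolding jointly_optimal_def by simp
qed


lemma cv_in:
  assumes "finite A" "g \<in> {1..num_classes A lam}"
  shows "class_value A lam g \<in> lam ` A"
proof -
  have "g - 1 < length (sorted_list_of_set (lam ` A))"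
    using assms unfolding num_classes_def by auto
  then have "class_value A lam g \<in> set (sorted_list_of_set (lam ` A))"
    unfolding class_value_def by (rule nth_mem)
  then show ?thesis using assms(1) by simp
qed

lemma cv_mono:
  assumes "finite A" "g \<in> {1..num_classes A lam}" "q \<in> {1..num_classes A lam}"
  shows "class_value A lam g \<le> class_value A lam q \<longleftrightarrow> g \<le> q"
proof -
  let ?xs = "sorted_list_of_set (lam ` A)"
  have len: "length ?xs = num_classes A lam" unfolding num_classes_def by simp
  have s: "sorted ?xs" and dis: "distinct ?xs" by auto
  have mono: "class_value A lam g' \<le> class_value A lam q'" if "g' \<le> q'" "g' \<in> {1..num_classes A lam}"
    "q' \<in> {1..num_classes A lam}" for g' q'
    unfolding class_value_def using that len by (intro sorted_nth_mono[OF s]) auto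
  show ?thesis
  proof
    assume le: "class_value A lam g \<le> class_value A lam q"
    show "g \<le> q"
    proof (rule ccontr)
      assume "\<not> g \<le> q"
      then have "q \<le> g" "q \<noteq> g" by auto
      have "class_value A lam q \<le> class_value A lam g" using mono[OF \<open>q \<le> g\<close> assms(3,2)] .
      moreover have "class_value A lam q \<noteq> class_value A lam g"
        unfolding class_value_def using assms len \<open>q \<noteq> g\<close> by (auto simp: nth_eq_iff_index_eq[OF dis])
      ultimately show False using le by simp
    qed
  next
    assume "g \<le> q" then show "class_value A lam g \<le> class_value A lam q" using mono assms by blast
  qed
qed

lemma cv_cover:
  assumes "finite A" "i \<in> A"
  shows "\<exists>q\<in>{1..num_classes A lam}. lam i = class_value A lam q"
proof -
  have "lam i \<in> set (sorted_list_of_set (lam ` A))" using assms by simp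
  then obtain n where n: "n < length (sorted_list_of_set (lam ` A))" "sorted_list_of_set (lam ` A) ! n = lam i"
    by (auto simp: in_set_conv_nth)
  then show ?thesis unfolding num_classes_def class_value_def
    by (intro bexI[of _ "Suc n"]) auto
qed

lemma upper_eq:
  assumes "finite A" "g \<in> {1..num_classes A lam}"
  shows "upper_set A lam g = {i\<in>A. class_value A lam g \<le> lam i}"
proof (intro set_eqI iffI)
  fix i assume "i \<in> upper_set A lam g"
  then obtain q where q: "q \<in> {g..num_classes A lam}" "i \<in> A" "lam i = class_value A lam q"
    unfolding upper_set_def class_set_def by auto
  then have "class_value A lam g \<le> lam i" using cv_mono[OF assms(1,2), of q] assms(2) by auto
  then show "i \<in> {i\<in>A. class_value A lam g \<le> lam i}" using q by auto
next
  fix i assume i: "i \<in> {i\<in>A. class_value A lam g \<le> lam i}"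
  then obtain q where q: "q \<in> {1..num_classes A lam}" "lam i = class_value A lam q"
    using cv_cover[OF assms(1)] by blast
  then have "g \<le> q" using cv_mono[OF assms(1,2) q(1)] i by auto
  then show "i \<in> upper_set A lam g" unfolding upper_set_def class_set_def using q i by auto
qed

lemma upper_split:
  assumes "finite A" "g \<in> {1..num_classes A lam}"
  shows "upper_set A lam g = class_set A lam g \<union> upper_set A lam (Suc g)"
    and "class_set A lam g \<inter> upper_set A lam (Suc g) = {}"
proof -
  have "{g..num_classes A lam} = insert g {Suc g..num_classes A lam}" using assms(2) by auto
  then show "upper_set A lam g = class_set A lam g \<union> upper_set A lam (Suc g)"
    unfolding upper_set_def by auto
  show "class_set A lam g \<inter> upper_set A lam (Suc g) = {}"
  proof (rule ccontr)
    assume "class_set A lam g \<inter> upper_set A lam (Suc g) \<noteq> {}"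
    then obtain i q where "q \<in> {Suc g..num_classes A lam}" "lam i = class_value A lam g"
      "lam i = class_value A lam q"
      unfolding upper_set_def class_set_def by blast
    moreover then have "q \<in> {1..num_classes A lam}" by auto
    ultimately show False using cv_mono[OF assms(1) _ assms(2), of q] by auto
  qed
qed

lemma jo_delay_eq:
  "jointly_optimal A G C a r d S X \<Longrightarrow> jointly_optimal A G C a r d S Y \<Longrightarrow> delay G d S X = delay G d S Y"
  unfolding jointly_optimal_def by (meson antisym)

lemma pay_formula:
  assumes fin: "finite A" "finite G" "finite C" and opt: "LP_optimal A G C a r d lam X"
    and dopt: "DLP_optimal A G C a r d lam \<alpha> p" and S: "S \<subseteq> A"
  shows "pay G S X p = (\<Sum>i\<in>S. \<Sum>k\<in>C. r i k * \<alpha> i k) - (\<Sum>i\<in>S. lam i * (\<Sum>j\<in>G. d i j * X i j))"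
proof -
  have "pay G S X p = (\<Sum>i\<in>S. (\<Sum>k\<in>C. r i k * \<alpha> i k) - lam i * (\<Sum>j\<in>G. d i j * X i j))"
    unfolding pay_def using comp_slack[OF fin opt dopt] S by (intro sum.cong) auto
  then show ?thesis by (simp add: sum_subtractf)
qed

theorem lemma4p2:
  fixes A :: "'a set" and G :: "'g set" and C :: "'c set"
    and a :: "'a \<Rightarrow> 'g \<Rightarrow> 'c \<Rightarrow> real" and r :: "'a \<Rightarrow> 'c \<Rightarrow> real"
    and d :: "'a \<Rightarrow> 'g \<Rightarrow> real" and m :: "'a \<Rightarrow> real" and lam :: "'a \<Rightarrow> real"
  assumes fin: "finite A" "finite G" "finite C"
    and r_nonneg: "\<forall>i\<in>A. \<forall>k\<in>C. r i k \<ge> 0"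
    and d_nonneg: "\<forall>i\<in>A. \<forall>j\<in>G. d i j \<ge> 0"
    and budgets: "\<forall>i\<in>A. m i > 0"
    and ext: "extensibility A G C a r d"
    and lam_pos: "\<forall>i\<in>A. lam i > 0"
    and feas: "\<exists>X. LP_feasible A G C a r X"
  shows
    "(\<forall>X. LP_optimal A G C a r d lam X \<longrightarrow>
          (\<forall>g\<in>{1..num_classes A lam}. jointly_optimal A G C a r d (upper_set A lam g) X))
     \<and> (\<forall>X Y. LP_optimal A G C a r d lam X \<longrightarrow> LP_optimal A G C a r d lam Y \<longrightarrow>
          (\<forall>g\<in>{1..num_classes A lam}.
             delay G d (class_set A lam g) X = delay G d (class_set A lam g) Y))
     \<and> (\<forall>\<alpha> p \<alpha>' p' g. DLP_optimal A G C a r d lam \<alpha> p \<longrightarrow> DLP_optimal A G C a r d lam \<alpha>' p' \<longrightarrow>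
          g \<in> {1..num_classes A lam} \<longrightarrow>
          (\<Sum>i\<in>class_set A lam g. \<Sum>k\<in>C. r i k * \<alpha> i k) =
          (\<Sum>i\<in>class_set A lam g. \<Sum>k\<in>C. r i k * \<alpha>' i k) \<longrightarrow>
          (\<forall>X. LP_optimal A G C a r d lam X \<longrightarrow>
             pay G (class_set A lam g) X p = pay G (class_set A lam g) X p'))
     \<and> (\<forall>X X' \<alpha> p g S. LP_optimal A G C a r d lam X \<longrightarrow> LP_optimal A G C a r d lam X' \<longrightarrow>
          DLP_optimal A G C a r d lam \<alpha> p \<longrightarrow> g \<in> {1..num_classes A lam} \<longrightarrow>
          S \<subseteq> class_set A lam g \<longrightarrow>
          delay G d S X \<le> delay G d S X' \<longrightarrow>
          pay G S X p \<ge> pay G S X' p \<and>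
          (delay G d S X < delay G d S X' \<longleftrightarrow> pay G S X p > pay G S X' p))"
  proof -
  have finsub: "finite S" if "S \<subseteq> A" for S using fin(1) that finite_subset by auto
  have cs_sub: "class_set A lam g \<subseteq> A" for g unfolding class_set_def by auto
  have us_sub: "upper_set A lam g \<subseteq> A" for g unfolding upper_set_def class_set_def by auto
  have P1: "\<forall>X. LP_optimal A G C a r d lam X \<longrightarrow>
          (\<forall>g\<in>{1..num_classes A lam}. jointly_optimal A G C a r d (upper_set A lam g) X)"
  proof (intro allI impI ballI)
    fix X g assume opt: "LP_optimal A G C a r d lam X" and g: "g \<in> {1..num_classes A lam}"
    show "jointly_optimal A G C a r d (upper_set A lam g) X"
      unfolding upper_eq[OF fin(1) g] using part1[OF fin(1) ext lam_pos opt cv_in[OF fin(1) g]] .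
  qed
  have P2: "\<forall>X Y. LP_optimal A G C a r d lam X \<longrightarrow> LP_optimal A G C a r d lam Y \<longrightarrow>
          (\<forall>g\<in>{1..num_classes A lam}.
             delay G d (class_set A lam g) X = delay G d (class_set A lam g) Y)"
  proof (intro allI impI ballI)
    fix X Y g assume oX: "LP_optimal A G C a r d lam X" and oY: "LP_optimal A G C a r d lam Y"
      and g: "g \<in> {1..num_classes A lam}"
    have d1: "delay G d (upper_set A lam g) X = delay G d (upper_set A lam g) Y"
      using P1 oX oY g jo_delay_eq by blast
    have d2: "delay G d (upper_set A lam (Suc g)) X = delay G d (upper_set A lam (Suc g)) Y"
    proof (cases "Suc g \<le> num_classes A lam")
      case True
      then have "Suc g \<in> {1..num_classes A lam}" by auto
      then show ?thesis using P1 oX oY jo_delay_eq by blast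
    next
      case False
      then have "upper_set A lam (Suc g) = {}" unfolding upper_set_def by auto
      then show ?thesis unfolding delay_def by simp
    qed
    have split: "delay G d (upper_set A lam g) Z = delay G d (class_set A lam g) Z + delay G d (upper_set A lam (Suc g)) Z" for Z
      unfolding delay_def upper_split(1)[OF fin(1) g]
      by (rule sum.union_disjoint[OF finsub[OF cs_sub] finsub[OF us_sub] upper_split(2)[OF fin(1) g]])
    show "delay G d (class_set A lam g) X = delay G d (class_set A lam g) Y"
      using d1 d2 split[of X] split[of Y] by simp
  qed
  have P3: "\<forall>\<alpha> p \<alpha>' p' g. DLP_optimal A G C a r d lam \<alpha> p \<longrightarrow> DLP_optimal A G C a r d lam \<alpha>' p' \<longrightarrow>
          g \<in> {1..num_classes A lam} \<longrightarrow>
          (\<Sum>i\<in>class_set A lam g. \<Sum>k\<in>C. r i k * \<alpha> i k) =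
          (\<Sum>i\<in>class_set A lam g. \<Sum>k\<in>C. r i k * \<alpha>' i k) \<longrightarrow>
          (\<forall>X. LP_optimal A G C a r d lam X \<longrightarrow>
             pay G (class_set A lam g) X p = pay G (class_set A lam g) X p')"
    using pay_formula[OF fin _ _ cs_sub] by simp
  have P4: "\<forall>X X' \<alpha> p g S. LP_optimal A G C a r d lam X \<longrightarrow> LP_optimal A G C a r d lam X' \<longrightarrow>
          DLP_optimal A G C a r d lam \<alpha> p \<longrightarrow> g \<in> {1..num_classes A lam} \<longrightarrow>
          S \<subseteq> class_set A lam g \<longrightarrow>
          delay G d S X \<le> delay G d S X' \<longrightarrow>
          pay G S X p \<ge> pay G S X' p \<and>
          (delay G d S X < delay G d S X' \<longleftrightarrow> pay G S X p > pay G S X' p)"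
  proof (intro allI impI conjI)
    fix X X' \<alpha> p g S
    assume oX: "LP_optimal A G C a r d lam X" and oX': "LP_optimal A G C a r d lam X'"
      and dopt: "DLP_optimal A G C a r d lam \<alpha> p" and g: "g \<in> {1..num_classes A lam}"
      and S: "S \<subseteq> class_set A lam g" and le: "delay G d S X \<le> delay G d S X'"
    define v where "v = class_value A lam g"
    have vpos: "v > 0" using cv_in[OF fin(1) g] lam_pos unfolding v_def by auto
    have SA: "S \<subseteq> A" using S cs_sub by blast
    have lamS: "lam i = v" if "i \<in> S" for i using S that unfolding class_set_def v_def by auto
    have pf: "pay G S Z p = (\<Sum>i\<in>S. \<Sum>k\<in>C. r i k * \<alpha> i k) - v * delay G d S Z"
      if "LP_optimal A G C a r d lam Z" for Z
    proof -
      have "(\<Sum>i\<in>S. lam i * (\<Sum>j\<in>G. d i j * Z i j)) = v * delay G d S Z"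
        unfolding delay_def sum_distrib_left using lamS by (intro sum.cong) auto
      then show ?thesis using pay_formula[OF fin that dopt SA] by simp
    qed
    show "pay G S X p \<ge> pay G S X' p"
      unfolding pf[OF oX] pf[OF oX'] using le vpos by (simp add: mult_left_mono)
    show "delay G d S X < delay G d S X' \<longleftrightarrow> pay G S X p > pay G S X' p"
      unfolding pf[OF oX] pf[OF oX'] using vpos by simp
  qed
  show ?thesis using P1 P2 P3 P4 by blast
qed

end
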